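(* For integers $s,t\ge0$ let $m_{i,j}^{s,t}=\int_{(0,1)^2}\frac{x^{s+i}y^{s+j}}{x+y}\left(\frac{1-x}{1+x}\right)^t\left(\frac{1-y}{1+y}\right)^tdx\,dy$, $\phi_i^{s,t}=\sqrt2\int_0^1\frac{x^{s+i}}{1+x}\left(\frac{1-x}{1+x}\right)^tdx$, $\tau_n^{s,t}=\det(m_{i,j}^{s,t})_{i,j=0}^{n-1}$, $\xi_n^{s,t}=\det(m_{i,j+1}^{s,t})_{i,j=0}^{n-1}$ (with $\tau_0^{s,t}=\xi_0^{s,t}=1$), and $$\sigma_n^{s,t}=\det\begin{pmatrix} m_{0,0}^{s,t}&\cdots&m_{0,n-1}^{s,t}&\phi_0^{s,t}\\ \vdots&&\vdots&\vdots\\ m_{n,0}^{s,t}&\cdots&m_{n,n-1}^{s,t}&\phi_n^{s,t}\end{pmatrix}\quad(n\ge0).$$ Then for all $s,t\ge0$: (a) for all $n\ge0$, $\ \tau_{n+1}^{s,t+1}\tau_{n}^{s,t}-\tau_{n}^{s,t+1}\tau_{n+1}^{s,t}=-\big(\sigma_{n}^{s,t}\big)^2$; (b) for all $n\ge1$, $\ \tau_n^{s,t}\tau_{n}^{s+1,t+1}-\tau_{n+1}^{s,t}\tau_{n-1}^{s+1,t+1}=\xi_n^{s,t+1}\xi_n^{s,t}-\sigma_{n-1}^{s+1,t}\sigma_n^{s,t}$.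
   Context: Empty determinants equal $1$; for $n=0$, $\sigma_0^{s,t}=\phi_0^{s,t}$. *)

theory Defs
  imports "HOL-Analysis.Analysis" "Jordan_Normal_Form.Determinant"
begin

definition mom :: "nat \<Rightarrow> nat \<Rightarrow> nat \<Rightarrow> nat \<Rightarrow> real" where
  "mom s t i j = (LINT p : {0<..<1} \<times> {0<..<1} | (lborel :: (real \<times> real) measure).
      (fst p) ^ (s + i) * (snd p) ^ (s + j) / (fst p + snd p)
      * ((1 - fst p) / (1 + fst p)) ^ t * ((1 - snd p) / (1 + snd p)) ^ t)"

definition phi :: "nat \<Rightarrow> nat \<Rightarrow> nat \<Rightarrow> real" where
  "phi s t i = sqrt 2 * (LINT x : {0<..<1} | lborel. x ^ (s + i) / (1 + x) * ((1 - x) / (1 + x)) ^ t)"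

definition tau :: "nat \<Rightarrow> nat \<Rightarrow> nat \<Rightarrow> real" where
  "tau s t n = det (mat n n (\<lambda>(i, j). mom s t i j))"

definition xi :: "nat \<Rightarrow> nat \<Rightarrow> nat \<Rightarrow> real" where
  "xi s t n = det (mat n n (\<lambda>(i, j). mom s t i (j + 1)))"

definition sigma_det :: "nat \<Rightarrow> nat \<Rightarrow> nat \<Rightarrow> real" where
  "sigma_det s t n = det (mat (n + 1) (n + 1)
      (\<lambda>(i, j). if j = n then phi s t i else mom s t i j))"

end

theory Submission
  imports Defs "Jordan_Normal_Form.Char_Poly"
begin


definition dd :: "(nat \<Rightarrow> nat \<Rightarrow> 'a::comm_ring_1) \<Rightarrow> nat \<Rightarrow> 'a" where
  "dd G k = det (mat k k (\<lambda>(i,j). G i j))"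

definition SS :: "(nat \<Rightarrow> nat \<Rightarrow> 'a::comm_ring_1) \<Rightarrow> nat \<Rightarrow> nat \<Rightarrow> nat \<Rightarrow> 'a" where
  "SS G k p q = dd G k * G p q - (\<Sum>i\<in>{0..<k}. G p i * (\<Sum>j\<in>{0..<k}. adj_mat (mat k k (\<lambda>(i,j). G i j)) $$ (i,j) * G j q))"

lemma schur_adj:
  fixes G :: "nat \<Rightarrow> nat \<Rightarrow> 'a::idom"
  shows "det (mat (k+m) (k+m) (\<lambda>(i,j). G i j)) * dd G k ^ m = dd G k * det (mat m m (\<lambda>(a,b). SS G k (k+a) (k+b)))"
proof -
  define A where "A = mat k k (\<lambda>(i,j). G i j)"
  define B where "B = mat k m (\<lambda>(i,j). G i (k+j))"
  define C where "C = mat m k (\<lambda>(i,j). G (k+i) j)"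
  define D where "D = mat m m (\<lambda>(i,j). G (k+i) (k+j))"
  define d where "d = dd G k"
  have dA: "d = det A" unfolding d_def dd_def A_def by simp
  have cA: "A \<in> carrier_mat k k" and cB: "B \<in> carrier_mat k m" and cC: "C \<in> carrier_mat m k"
    and cD: "D \<in> carrier_mat m m" unfolding A_def B_def C_def D_def by auto
  have adjA: "adj_mat A \<in> carrier_mat k k" "A * adj_mat A = d \<cdot>\<^sub>m 1\<^sub>m k" using adj_mat[OF cA] dA by auto
  have big: "mat (k+m) (k+m) (\<lambda>(i,j). G i j) = four_block_mat A B C D"
    by (rule eq_matI, auto simp: A_def B_def C_def D_def)
  define N where "N = four_block_mat (1\<^sub>m k) (- (adj_mat A * B)) (0\<^sub>m m k) (d \<cdot>\<^sub>m 1\<^sub>m m)"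
  have cAB: "adj_mat A * B \<in> carrier_mat k m" using adjA cB by auto
  have detN: "det N = d ^ m" unfolding N_def
    by (subst det_four_block_mat_lower_left_zero[of _ k _ m], insert cAB, auto simp: det_smult)
  have "four_block_mat A B C D * N = four_block_mat (A * 1\<^sub>m k + B * 0\<^sub>m m k) (A * (- (adj_mat A * B)) + B * (d \<cdot>\<^sub>m 1\<^sub>m m))
     (C * 1\<^sub>m k + D * 0\<^sub>m m k) (C * (- (adj_mat A * B)) + D * (d \<cdot>\<^sub>m 1\<^sub>m m))"
    unfolding N_def by (rule mult_four_block_mat[OF cA cB cC cD], insert cAB, auto)
  also have "A * 1\<^sub>m k + B * 0\<^sub>m m k = A" using cA cB by auto
  also have "C * 1\<^sub>m k + D * 0\<^sub>m m k = C" using cC cD by auto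
  also have "A * (- (adj_mat A * B)) + B * (d \<cdot>\<^sub>m 1\<^sub>m m) = 0\<^sub>m k m"
  proof -
    have "A * (- (adj_mat A * B)) = - (A * (adj_mat A * B))" using cA cB adjA by simp
    also have "A * (adj_mat A * B) = (A * adj_mat A) * B" using assoc_mult_mat[OF cA adjA(1) cB] by simp
    also have "\<dots> = d \<cdot>\<^sub>m B" using adjA cB by (simp add: mult_smult_assoc_mat[of _ k k])
    finally show ?thesis using cB by (intro eq_matI, auto)
  qed
  also have "C * (- (adj_mat A * B)) + D * (d \<cdot>\<^sub>m 1\<^sub>m m) = mat m m (\<lambda>(a,b). SS G k (k+a) (k+b))"
  proof (rule eq_matI)
    fix a b assume ab: "a < dim_row (mat m m (\<lambda>(a,b). SS G k (k+a) (k+b)))" "b < dim_col (mat m m (\<lambda>(a,b). SS G k (k+a) (k+b)))"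
    hence a: "a < m" and b: "b < m" by auto
    have neg: "C * - (adj_mat A * B) = - (C * (adj_mat A * B))" using cC cAB by (intro uminus_mult_right_mat) auto
    have "(C * (- (adj_mat A * B)) + D * (d \<cdot>\<^sub>m 1\<^sub>m m)) $$ (a,b) = d * G (k+a) (k+b) - (C * (adj_mat A * B)) $$ (a,b)"
      unfolding neg using a b cC cD cAB cB by (subst index_add_mat, auto simp: D_def)
    also have "(C * (adj_mat A * B)) $$ (a,b) = (\<Sum>i\<in>{0..<k}. G (k+a) i * (\<Sum>j\<in>{0..<k}. adj_mat A $$ (i,j) * G j (k+b)))"
      using a b cC cB adjA by (auto simp: scalar_prod_def C_def B_def intro!: sum.cong)
    finally show "(C * (- (adj_mat A * B)) + D * (d \<cdot>\<^sub>m 1\<^sub>m m)) $$ (a,b) = mat m m (\<lambda>(a,b). SS G k (k+a) (k+b)) $$ (a,b)"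
      using a b by (simp add: SS_def d_def A_def)
  qed (insert cC cD cAB, auto)
  finally have prod: "four_block_mat A B C D * N = four_block_mat A (0\<^sub>m k m) C (mat m m (\<lambda>(a,b). SS G k (k+a) (k+b)))" .
  have cN: "N \<in> carrier_mat (k+m) (k+m)" unfolding N_def using cAB by auto
  have "det (four_block_mat A B C D) * det N = det (four_block_mat A B C D * N)"
    by (rule det_mult[symmetric], insert cA cB cC cD cN, auto)
  also have "\<dots> = det A * det (mat m m (\<lambda>(a,b). SS G k (k+a) (k+b)))"
    unfolding prod by (rule det_four_block_mat_upper_right_zero[OF cA refl cC], auto)
  finally show ?thesis unfolding big detN dA[symmetric] d_def .
qed

definition sub :: "(nat \<Rightarrow> nat \<Rightarrow> 'a::comm_ring_1) \<Rightarrow> (nat \<Rightarrow> nat) \<Rightarrow> (nat \<Rightarrow> nat) \<Rightarrow> nat \<Rightarrow> 'a" where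
  "sub F r c N = det (mat N N (\<lambda>(i,j). F (r i) (c j)))"

definition e1 :: "nat \<Rightarrow> nat \<Rightarrow> nat \<Rightarrow> nat" where
  "e1 k p i = (if i = k then p else i)"

definition e2 :: "nat \<Rightarrow> nat \<Rightarrow> nat \<Rightarrow> nat \<Rightarrow> nat" where
  "e2 k a b i = (if i = k then a else if i = Suc k then b else i)"

lemma det2: "det (mat 2 2 f) = f (0,0) * f (1,1) - f (0,1) * (f (1,0) :: 'a :: comm_ring_1)"
proof -
  have c: "mat 2 2 f \<in> carrier_mat 2 2" by auto
  show ?thesis
    apply (subst laplace_expansion_row[OF c, of 0])
     apply (simp_all add: numeral_2_eq_2 cofactor_def det_single mat_delete_carrier lessThan_Suc)
    apply (simp add: mat_delete_def det_single)
    done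
qed

lemma dd_cong: "(\<And>i j. i < k \<Longrightarrow> j < k \<Longrightarrow> F i j = G i j) \<Longrightarrow> mat k k (\<lambda>(i,j). F i j) = mat k k (\<lambda>(i,j). G i j)"
  by (rule eq_matI, auto)

lemma SS_cong:
  assumes "\<And>i j. i < k \<Longrightarrow> j < k \<Longrightarrow> F i j = G i j"
    and "\<And>i. i < k \<Longrightarrow> F p i = G p' i" and "\<And>j. j < k \<Longrightarrow> F j q = G j q'"
    and "F p q = G p' q'"
  shows "SS F k p q = SS G k p' q'"
proof -
  have m: "mat k k (\<lambda>(i,j). F i j) = mat k k (\<lambda>(i,j). G i j)" by (rule dd_cong, fact)
  show ?thesis unfolding SS_def dd_def m using assms(2-4) by (auto intro!: sum.cong)
qed

lemma cor1:
  fixes F :: "nat \<Rightarrow> nat \<Rightarrow> 'a::idom"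
  assumes d: "dd F k \<noteq> 0"
  shows "sub F (e1 k p) (e1 k q) (Suc k) = SS F k p q"
proof -
  define G where "G = (\<lambda>i j. F (e1 k p i) (e1 k q j))"
  have dG: "dd G k = dd F k" unfolding dd_def G_def by (rule arg_cong[where f=det], rule dd_cong, auto simp: e1_def)
  have sG: "SS G k (k+0) (k+0) = SS F k p q" by (rule SS_cong, auto simp: G_def e1_def)
  from schur_adj[of k 1 G] have "det (mat (k+1) (k+1) (\<lambda>(i,j). G i j)) * dd F k = dd F k * SS F k p q"
    unfolding dG by (simp add: det_single sG[simplified])
  with d have "det (mat (k+1) (k+1) (\<lambda>(i,j). G i j)) = SS F k p q" by (simp add: mult.commute)
  thus ?thesis unfolding sub_def G_def by simp
qed

lemma cor2:
  fixes F :: "nat \<Rightarrow> nat \<Rightarrow> 'a::idom"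
  assumes d: "dd F k \<noteq> 0"
  shows "dd F k * sub F (e2 k a b) (e2 k a' b') (k+2) = SS F k a a' * SS F k b b' - SS F k a b' * SS F k b a'"
proof -
  define G where "G = (\<lambda>i j. F (e2 k a b i) (e2 k a' b' j))"
  have dG: "dd G k = dd F k" unfolding dd_def G_def by (rule arg_cong[where f=det], rule dd_cong, auto simp: e2_def)
  have s00: "SS G k (k+0) (k+0) = SS F k a a'" by (rule SS_cong, auto simp: G_def e2_def)
  have s01: "SS G k (k+0) (k+1) = SS F k a b'" by (rule SS_cong, auto simp: G_def e2_def)
  have s10: "SS G k (k+1) (k+0) = SS F k b a'" by (rule SS_cong, auto simp: G_def e2_def)
  have s11: "SS G k (k+1) (k+1) = SS F k b b'" by (rule SS_cong, auto simp: G_def e2_def)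
  from schur_adj[of k 2 G] have "det (mat (k+2) (k+2) (\<lambda>(i,j). G i j)) * (dd F k * dd F k) = dd F k * (SS F k a a' * SS F k b b' - SS F k a b' * SS F k b a')"
    unfolding dG det2 using s00 s01 s10 s11 by (simp add: power2_eq_square)
  with d have "det (mat (k+2) (k+2) (\<lambda>(i,j). G i j)) * dd F k = (SS F k a a' * SS F k b b' - SS F k a b' * SS F k b a')"
    by (metis (no_types, lifting) mult.left_commute mult_left_cancel)
  thus ?thesis unfolding sub_def G_def by (simp add: mult.commute)
qed


abbreviation "D1 F k x y \<equiv> sub F (e1 k x) (e1 k y) (Suc k)"
abbreviation "D2 F k x y x' y' \<equiv> sub F (e2 k x y) (e2 k x' y') (k+2)"

lemma dj_nz:
  fixes F :: "nat \<Rightarrow> nat \<Rightarrow> 'a::idom"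
  assumes d: "dd F k \<noteq> 0"
  shows "dd F k * D2 F k a b a' b' = D1 F k a a' * D1 F k b b' - D1 F k a b' * D1 F k b a'"
  unfolding cor2[OF d] cor1[OF d] ..

lemma ring_aux:
  fixes d x1 x2 x3 x4 :: "'a::comm_ring_1"
  assumes "d * x1 = Sbb * Scc - Sbc * Scb" "d * x2 = Saa * Sbb - Sab * Sba"
    "d * x3 = Sab * Scc - Sac * Scb" "d * x4 = Saa * Sbc - Sac * Sba"
  shows "d * (Saa * x1 - x2 * Scc) = d * (x3 * Sba - x4 * Scb)"
proof -
  have e1: "d * (Saa * x1 - x2 * Scc) = Saa * (d * x1) - (d * x2) * Scc" by (simp add: algebra_simps)
  have e2: "d * (x3 * Sba - x4 * Scb) = (d * x3) * Sba - (d * x4) * Scb" by (simp add: algebra_simps)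
  show ?thesis unfolding e1 e2 assms by (simp add: algebra_simps)
qed

lemma gen3_nz:
  fixes F :: "nat \<Rightarrow> nat \<Rightarrow> 'a::idom"
  assumes d: "dd F k \<noteq> 0"
  shows "D1 F k a a * D2 F k b c b c - D2 F k a b a b * D1 F k c c
       = D2 F k a c b c * D1 F k b a - D2 F k a b a c * D1 F k c b"
proof -
  have "dd F k * (D1 F k a a * D2 F k b c b c - D2 F k a b a b * D1 F k c c)
      = dd F k * (D2 F k a c b c * D1 F k b a - D2 F k a b a c * D1 F k c b)"
    using cor2[OF d, of b c b c] cor2[OF d, of a b a b] cor2[OF d, of a c b c] cor2[OF d, of a b a c]
    unfolding cor1[OF d] by (rule ring_aux)
  with d show ?thesis by simp
qed

definition pert :: "(nat \<Rightarrow> nat \<Rightarrow> 'a::comm_ring_1) \<Rightarrow> nat \<Rightarrow> nat \<Rightarrow> 'a poly" where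
  "pert F i j = [:F i j:] + (if i = j then [:0,1:] else 0)"

lemma dd_pert: "dd (pert F) k \<noteq> (0 :: 'a :: idom poly)"
proof -
  define A where "A = mat k k (\<lambda>(i,j). - F i j)"
  have A: "A \<in> carrier_mat k k" unfolding A_def by auto
  have "mat k k (\<lambda>(i,j). pert F i j) = char_poly_matrix A"
    unfolding char_poly_matrix_def A_def pert_def by (rule eq_matI, auto)
  hence "dd (pert F) k = char_poly A" unfolding dd_def char_poly_def by simp
  moreover have "coeff (char_poly A) k = 1" using degree_monic_char_poly[OF A] by simp
  ultimately show ?thesis by auto
qed

lemma poly_det0: assumes "A \<in> carrier_mat n n"
  shows "poly (det A) (0 :: 'a :: comm_ring_1) = det (map_mat (\<lambda>p. poly p 0) A)"
  apply (subst (1 2) det_def', use assms in force, rule assms)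
  unfolding poly_sum poly_mult poly_prod using assms
  by (intro sum.cong[OF refl] arg_cong2[of _ _ _ _ "(*)"] prod.cong[OF refl], auto simp: sign_def)

lemma eval_sub: "poly (sub (pert F) r c N) 0 = sub F r c N"
proof -
  have "poly (sub (pert F) r c N) 0 = det (map_mat (\<lambda>p. poly p 0) (mat N N (\<lambda>(i,j). pert F (r i) (c j))))"
    unfolding sub_def by (rule poly_det0, auto)
  also have "map_mat (\<lambda>p. poly p 0) (mat N N (\<lambda>(i,j). pert F (r i) (c j))) = mat N N (\<lambda>(i,j). F (r i) (c j))"
    by (rule eq_matI, auto simp: pert_def)
  finally show ?thesis unfolding sub_def .
qed

lemma dj:
  fixes F :: "nat \<Rightarrow> nat \<Rightarrow> 'a::idom"
  shows "dd F k * D2 F k a b a' b' = D1 F k a a' * D1 F k b b' - D1 F k a b' * D1 F k b a'"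
proof -
  have "dd F k = sub F id id k" unfolding dd_def sub_def by simp
  moreover have "dd (pert F) k = sub (pert F) id id k" unfolding dd_def sub_def by simp
  moreover note arg_cong[OF dj_nz[OF dd_pert[of F k], of a b a' b'], of "\<lambda>p. poly p 0"]
  ultimately show ?thesis by (simp add: eval_sub)
qed

lemma gen3:
  fixes F :: "nat \<Rightarrow> nat \<Rightarrow> 'a::idom"
  shows "D1 F k a a * D2 F k b c b c - D2 F k a b a b * D1 F k c c
       = D2 F k a c b c * D1 F k b a - D2 F k a b a c * D1 F k c b"
  using arg_cong[OF gen3_nz[OF dd_pert[of F k], of a b c], of "\<lambda>p. poly p 0"]
  by (simp add: eval_sub)


lemma border1:
  fixes a :: "nat \<Rightarrow> nat \<Rightarrow> 'a::idom"
  shows "det (mat (Suc k) (Suc k) (\<lambda>(i,j). if i < k \<and> j < k then a i j else if i < k then v i else if j < k then w j else 1))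
       = det (mat k k (\<lambda>(i,j). a i j - v i * w j))"
proof -
  define A where "A = mat k k (\<lambda>(i,j). a i j)"
  define V where "V = mat k 1 (\<lambda>(i,j). v i)"
  define W where "W = mat 1 k (\<lambda>(i,j). w j)"
  have cA: "A \<in> carrier_mat k k" and cV: "V \<in> carrier_mat k 1" and cW: "W \<in> carrier_mat 1 k"
    unfolding A_def V_def W_def by auto
  have X: "mat (Suc k) (Suc k) (\<lambda>(i,j). if i < k \<and> j < k then a i j else if i < k then v i else if j < k then w j else 1)
     = four_block_mat A V W (1\<^sub>m 1)"
    by (rule eq_matI, auto simp: A_def V_def W_def)
  define Y where "Y = four_block_mat (1\<^sub>m k) (0\<^sub>m k 1) (- W) (1\<^sub>m 1)"
  have cY: "Y \<in> carrier_mat (k+1) (k+1)" unfolding Y_def using cW by auto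
  have dY: "det Y = 1" unfolding Y_def
    by (subst det_four_block_mat_upper_right_zero[of _ k _ 1], insert cW, auto)
  have "four_block_mat A V W (1\<^sub>m 1) * Y = four_block_mat (A * 1\<^sub>m k + V * (- W)) (A * 0\<^sub>m k 1 + V * 1\<^sub>m 1)
      (W * 1\<^sub>m k + 1\<^sub>m 1 * (- W)) (W * 0\<^sub>m k 1 + 1\<^sub>m 1 * 1\<^sub>m 1)"
    unfolding Y_def by (rule mult_four_block_mat[OF cA cV cW], insert cW, auto)
  also have "A * 1\<^sub>m k + V * (- W) = mat k k (\<lambda>(i,j). a i j - v i * w j)"
    using cA cV cW by (intro eq_matI, auto simp: A_def V_def W_def scalar_prod_def)
  also have "W * 1\<^sub>m k + 1\<^sub>m 1 * (- W) = 0\<^sub>m 1 k"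
    using cW by (intro eq_matI, auto)
  finally have P: "four_block_mat A V W (1\<^sub>m 1) * Y = four_block_mat (mat k k (\<lambda>(i,j). a i j - v i * w j)) (A * 0\<^sub>m k 1 + V * 1\<^sub>m 1) (0\<^sub>m 1 k) (W * 0\<^sub>m k 1 + 1\<^sub>m 1 * 1\<^sub>m 1)" .
  have "det (four_block_mat A V W (1\<^sub>m 1)) = det (four_block_mat A V W (1\<^sub>m 1)) * det Y" unfolding dY by simp
  also have "\<dots> = det (four_block_mat A V W (1\<^sub>m 1) * Y)"
    by (rule det_mult[symmetric], insert cA cV cW cY, auto)
  also have "\<dots> = det (mat k k (\<lambda>(i,j). a i j - v i * w j)) * det (W * 0\<^sub>m k 1 + 1\<^sub>m 1 * 1\<^sub>m 1)"
    unfolding P by (rule det_four_block_mat_lower_left_zero[of _ k _ 1], insert cA cV cW, auto)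
  also have "W * 0\<^sub>m k 1 + 1\<^sub>m 1 * 1\<^sub>m 1 = 1\<^sub>m 1" using cW by (intro eq_matI, auto)
  finally show ?thesis unfolding X by simp
qed

lemma det_perm_rows:
  assumes p: "p permutes {0..<N}"
  shows "det (mat N N (\<lambda>(i,j). G (p i) j)) = signof p * det (mat N N (\<lambda>(i,j). G i j))"
proof -
  have "det (mat N N (\<lambda>(i,j). mat N N (\<lambda>(i,j). G i j) $$ (p i, j))) = signof p * det (mat N N (\<lambda>(i,j). G i j))"
    by (rule det_permute_rows[OF _ p], auto)
  moreover have "mat N N (\<lambda>(i,j). mat N N (\<lambda>(i,j). G i j) $$ (p i, j)) = mat N N (\<lambda>(i,j). G (p i) j)"
    using p by (intro eq_matI, auto simp: permutes_in_image)
  ultimately show ?thesis by simp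
qed

lemma det_perm_cols:
  assumes p: "p permutes {0..<N}"
  shows "det (mat N N (\<lambda>(i,j). G i (p j))) = signof p * det (mat N N (\<lambda>(i,j). G i j))"
proof -
  have "det (mat N N (\<lambda>(i,j). G i (p j))) = det (transpose_mat (mat N N (\<lambda>(i,j). G i (p j))))"
    by (rule det_transpose[symmetric], auto)
  also have "transpose_mat (mat N N (\<lambda>(i,j). G i (p j))) = mat N N (\<lambda>(i,j). G j (p i))"
    by (intro eq_matI, auto)
  also have "det \<dots> = signof p * det (mat N N (\<lambda>(i,j). G j i))"
    using det_perm_rows[OF p, of "\<lambda>i j. G j i"] by simp
  also have "det (mat N N (\<lambda>(i,j). G j i)) = det (transpose_mat (mat N N (\<lambda>(i,j). G i j)))"
    by (intro arg_cong[where f=det] eq_matI, auto)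
  also have "\<dots> = det (mat N N (\<lambda>(i,j). G i j))" by (rule det_transpose, auto)
  finally show ?thesis .
qed

lemma signof_sq: "signof p * signof p = (1 :: 'a :: comm_ring_1)"
  by (cases p rule: sign_cases) auto



definition bm :: "nat \<Rightarrow> (nat \<Rightarrow> nat \<Rightarrow> real) \<Rightarrow> (nat \<Rightarrow> real) \<Rightarrow> nat \<Rightarrow> nat \<Rightarrow> real" where
  "bm L M \<phi> x y = (if x < L \<and> y < L then M x y else if x < L then \<phi> x else if y < L then \<phi> y else 1)"

lemma sub_eq: "(\<And>i j. i < N \<Longrightarrow> j < N \<Longrightarrow> F (r i) (c j) = X i j) \<Longrightarrow> sub F r c N = det (mat N N (\<lambda>(i,j). X i j))"
  unfolding sub_def by (intro arg_cong[where f=det] eq_matI, auto)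

lemma det_mat_cong: "(\<And>i j. i < N \<Longrightarrow> j < N \<Longrightarrow> X i j = Y i j) \<Longrightarrow> det (mat N N (\<lambda>(i,j). X i j)) = det (mat N N (\<lambda>(i,j). Y i j))"
  by (intro arg_cong[where f=det] eq_matI, auto)

lemma det_mat_transp: "det (mat N N (\<lambda>(i,j). X i j)) = det (mat N N (\<lambda>(i,j). X j i))"
proof -
  have "det (mat N N (\<lambda>(i,j). X i j)) = det (transpose_mat (mat N N (\<lambda>(i,j). X i j)))"
    by (rule det_transpose[symmetric], auto)
  also have "transpose_mat (mat N N (\<lambda>(i,j). X i j)) = mat N N (\<lambda>(i,j). X j i)" by (intro eq_matI, auto)
  finally show ?thesis .
qed

lemma part_a:
  fixes M :: "nat \<Rightarrow> nat \<Rightarrow> real"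
  assumes sym: "\<And>i j. M i j = M j i"
  shows "det (mat (n+1) (n+1) (\<lambda>(i,j). M i j - \<phi> i * \<phi> j)) * det (mat n n (\<lambda>(i,j). M i j))
       - det (mat n n (\<lambda>(i,j). M i j - \<phi> i * \<phi> j)) * det (mat (n+1) (n+1) (\<lambda>(i,j). M i j))
       = - ((det (mat (n+1) (n+1) (\<lambda>(i,j). if j = n then \<phi> i else M i j))) ^ 2)"
proof -
  define F where "F = bm (n+1) M \<phi>"
  note dj[of F n n "n+1" n "n+1"]
  have q0: "dd F n = det (mat n n (\<lambda>(i,j). M i j))"
    unfolding dd_def F_def by (rule det_mat_cong, auto simp: bm_def)
  have q1: "D2 F n n (n+1) n (n+1) = det (mat (n+1) (n+1) (\<lambda>(i,j). M i j - \<phi> i * \<phi> j))"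
  proof -
    have "D2 F n n (n+1) n (n+1) = det (mat (n+2) (n+2) (\<lambda>(i,j). if i < n+1 \<and> j < n+1 then M i j else if i < n+1 then \<phi> i else if j < n+1 then \<phi> j else 1))"
      by (rule sub_eq, auto simp: F_def bm_def e2_def)
    also have "\<dots> = det (mat (Suc (n+1)) (Suc (n+1)) (\<lambda>(i,j). if i < n+1 \<and> j < n+1 then M i j else if i < n+1 then \<phi> i else if j < n+1 then \<phi> j else 1))"
      by simp
    finally show ?thesis unfolding border1 .
  qed
  have q2: "D1 F n n n = det (mat (Suc n) (Suc n) (\<lambda>(i,j). M i j))"
    by (rule sub_eq, auto simp: F_def bm_def e1_def)
  have q3: "D1 F n (n+1) (n+1) = det (mat n n (\<lambda>(i,j). M i j - \<phi> i * \<phi> j))"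
  proof -
    have "D1 F n (n+1) (n+1) = det (mat (Suc n) (Suc n) (\<lambda>(i,j). if i < n \<and> j < n then M i j else if i < n then \<phi> i else if j < n then \<phi> j else 1))"
      by (rule sub_eq, auto simp: F_def bm_def e1_def)
    thus ?thesis unfolding border1 .
  qed
  have q4: "D1 F n n (n+1) = det (mat (Suc n) (Suc n) (\<lambda>(i,j). if j = n then \<phi> i else M i j))"
    by (rule sub_eq, auto simp: F_def bm_def e1_def)
  have q5: "D1 F n (n+1) n = det (mat (Suc n) (Suc n) (\<lambda>(i,j). if j = n then \<phi> i else M i j))"
  proof -
    have "D1 F n (n+1) n = det (mat (Suc n) (Suc n) (\<lambda>(i,j). if i = n then \<phi> j else M j i))"
      by (rule sub_eq, auto simp: F_def bm_def e1_def sym)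
    also have "\<dots> = det (mat (Suc n) (Suc n) (\<lambda>(i,j). if j = n then \<phi> i else M i j))"
      by (rule det_mat_transp)
    finally show ?thesis .
  qed
  show ?thesis using dj[of F n n "n+1" n "n+1"] unfolding q0 q1 q2 q3 q4 q5
    by (simp add: algebra_simps power2_eq_square)
qed


lemma det_perm_both:
  assumes p: "p permutes {0..<N}"
  shows "det (mat N N (\<lambda>(i,j). G (p i) (p j))) = det (mat N N (\<lambda>(i,j). G i j))"
  using det_perm_rows[OF p, of "\<lambda>i j. G i (p j)"] det_perm_cols[OF p, of G]
  by (simp add: mult.assoc[symmetric] signof_sq)

definition cyc :: "nat \<Rightarrow> nat \<Rightarrow> nat" where
  "cyc k i = (if i < k then Suc i else if i = k then 0 else i)"

lemma cyc_perm: assumes "k < N" shows "cyc k permutes {0..<N}"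
  unfolding permutes_def
proof (intro conjI allI impI)
  fix x assume "x \<notin> {0..<N}" thus "cyc k x = x" using assms by (auto simp: cyc_def)
next
  fix y
  show "\<exists>!x. cyc k x = y"
  proof (rule ex1I[of _ "if y = 0 then k else if y \<le> k then y - 1 else y"])
    show "cyc k (if y = 0 then k else if y \<le> k then y - 1 else y) = y" by (auto simp: cyc_def)
  next
    fix x assume "cyc k x = y"
    thus "x = (if y = 0 then k else if y \<le> k then y - 1 else y)" by (auto simp: cyc_def split: if_splits)
  qed
qed

lemma lt2: "i < Suc (Suc k) \<Longrightarrow> i < k \<or> i = k \<or> i = Suc k" by auto

lemma part_b:
  fixes M :: "nat \<Rightarrow> nat \<Rightarrow> real"
  assumes sym: "\<And>i j. M i j = M j i"
  shows "det (mat (k+1) (k+1) (\<lambda>(i,j). M i j)) * det (mat (k+1) (k+1) (\<lambda>(i,j). M (i+1) (j+1) - \<phi> (i+1) * \<phi> (j+1)))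
     - det (mat (k+2) (k+2) (\<lambda>(i,j). M i j)) * det (mat k k (\<lambda>(i,j). M (i+1) (j+1) - \<phi> (i+1) * \<phi> (j+1)))
   = det (mat (k+1) (k+1) (\<lambda>(i,j). M i (j+1) - \<phi> i * \<phi> (j+1))) * det (mat (k+1) (k+1) (\<lambda>(i,j). M i (j+1)))
     - det (mat (k+1) (k+1) (\<lambda>(i,j). if j = k then \<phi> (i+1) else M (i+1) (j+1)))
       * det (mat (k+2) (k+2) (\<lambda>(i,j). if j = k+1 then \<phi> i else M i j))"
proof -
  define \<rho> where "\<rho> = (\<lambda>i. if i < k then i+1 else if i = k then 0 else if i = k+1 then k+1 else k+2)"
  define R where "R = (\<lambda>i::nat. if i < k+1 then i else k+2)"
  define F where "F = (\<lambda>i j. bm (k+2) M \<phi> (\<rho> i) (\<rho> j))"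
  have p1: "cyc k permutes {0..<Suc k}" by (rule cyc_perm, simp)
  have p2: "cyc k permutes {0..<k+2}" by (rule cyc_perm, simp)
  have Q1: "D1 F k k k = det (mat (k+1) (k+1) (\<lambda>(i,j). M i j))"
  proof -
    have "D1 F k k k = det (mat (Suc k) (Suc k) (\<lambda>(i,j). M (cyc k i) (cyc k j)))"
      by (rule sub_eq, auto simp: F_def bm_def e1_def \<rho>_def cyc_def dest!: lt2)
    also have "\<dots> = det (mat (Suc k) (Suc k) (\<lambda>(i,j). M i j))" by (rule det_perm_both[OF p1])
    finally show ?thesis by simp
  qed
  have Q2: "D2 F k (k+1) (k+2) (k+1) (k+2) = det (mat (k+1) (k+1) (\<lambda>(i,j). M (i+1) (j+1) - \<phi> (i+1) * \<phi> (j+1)))"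
  proof -
    have "D2 F k (k+1) (k+2) (k+1) (k+2) = det (mat (k+2) (k+2) (\<lambda>(i,j). if i < k+1 \<and> j < k+1 then M (i+1) (j+1) else if i < k+1 then \<phi> (i+1) else if j < k+1 then \<phi> (j+1) else 1))"
      by (rule sub_eq, auto simp: F_def bm_def e2_def \<rho>_def)
    also have "\<dots> = det (mat (Suc (k+1)) (Suc (k+1)) (\<lambda>(i,j). if i < k+1 \<and> j < k+1 then M (i+1) (j+1) else if i < k+1 then \<phi> (i+1) else if j < k+1 then \<phi> (j+1) else 1))"
      by simp
    finally show ?thesis unfolding border1 .
  qed
  have Q3: "D2 F k k (k+1) k (k+1) = det (mat (k+2) (k+2) (\<lambda>(i,j). M i j))"
  proof -
    have "D2 F k k (k+1) k (k+1) = det (mat (k+2) (k+2) (\<lambda>(i,j). M (cyc k i) (cyc k j)))"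
      by (rule sub_eq, auto simp: F_def bm_def e2_def \<rho>_def cyc_def dest!: lt2)
    also have "\<dots> = det (mat (k+2) (k+2) (\<lambda>(i,j). M i j))" by (rule det_perm_both[OF p2])
    finally show ?thesis .
  qed
  have Q4: "D1 F k (k+2) (k+2) = det (mat k k (\<lambda>(i,j). M (i+1) (j+1) - \<phi> (i+1) * \<phi> (j+1)))"
  proof -
    have "D1 F k (k+2) (k+2) = det (mat (Suc k) (Suc k) (\<lambda>(i,j). if i < k \<and> j < k then M (i+1) (j+1) else if i < k then \<phi> (i+1) else if j < k then \<phi> (j+1) else 1))"
      by (rule sub_eq, auto simp: F_def bm_def e1_def \<rho>_def)
    thus ?thesis unfolding border1 .
  qed
  have Q5: "D2 F k k (k+2) (k+1) (k+2) = signof (cyc k) * det (mat (k+1) (k+1) (\<lambda>(i,j). M i (j+1) - \<phi> i * \<phi> (j+1)))"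
  proof -
    define H where "H = (\<lambda>x j. bm (k+2) M \<phi> (R x) (j+1))"
    have "D2 F k k (k+2) (k+1) (k+2) = det (mat (k+2) (k+2) (\<lambda>(i,j). H (cyc k i) j))"
      by (rule sub_eq, auto simp: F_def H_def R_def bm_def e2_def \<rho>_def cyc_def dest!: lt2)
    also have "\<dots> = signof (cyc k) * det (mat (k+2) (k+2) (\<lambda>(i,j). H i j))" by (rule det_perm_rows[OF p2])
    also have "det (mat (k+2) (k+2) (\<lambda>(i,j). H i j)) = det (mat (k+2) (k+2) (\<lambda>(i,j). if i < k+1 \<and> j < k+1 then M i (j+1) else if i < k+1 then \<phi> i else if j < k+1 then \<phi> (j+1) else 1))"
      by (rule det_mat_cong, auto simp: H_def R_def bm_def)
    also have "\<dots> = det (mat (Suc (k+1)) (Suc (k+1)) (\<lambda>(i,j). if i < k+1 \<and> j < k+1 then M i (j+1) else if i < k+1 then \<phi> i else if j < k+1 then \<phi> (j+1) else 1))"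
      by simp
    also have "\<dots> = det (mat (k+1) (k+1) (\<lambda>(i,j). M i (j+1) - \<phi> i * \<phi> (j+1)))" by (rule border1)
    finally show ?thesis .
  qed
  have Q6: "D1 F k (k+1) k = signof (cyc k) * det (mat (k+1) (k+1) (\<lambda>(i,j). M i (j+1)))"
  proof -
    have "D1 F k (k+1) k = det (mat (Suc k) (Suc k) (\<lambda>(i,j). M (i+1) (cyc k j)))"
      by (rule sub_eq, auto simp: F_def bm_def e1_def \<rho>_def cyc_def dest!: lt2)
    also have "\<dots> = signof (cyc k) * det (mat (Suc k) (Suc k) (\<lambda>(i,j). M (i+1) j))"
      by (rule det_perm_cols[OF p1])
    also have "det (mat (Suc k) (Suc k) (\<lambda>(i,j). M (i+1) j)) = det (mat (Suc k) (Suc k) (\<lambda>(i,j). M (j+1) i))"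
      by (rule det_mat_transp)
    also have "\<dots> = det (mat (Suc k) (Suc k) (\<lambda>(i,j). M i (j+1)))"
      by (rule det_mat_cong, simp add: sym)
    finally show ?thesis by simp
  qed
  have Q7: "D2 F k k (k+1) k (k+2) = det (mat (k+2) (k+2) (\<lambda>(i,j). if j = k+1 then \<phi> i else M i j))"
  proof -
    define H where "H = (\<lambda>x y. bm (k+2) M \<phi> x (R y))"
    have "D2 F k k (k+1) k (k+2) = det (mat (k+2) (k+2) (\<lambda>(i,j). H (cyc k i) (cyc k j)))"
      by (rule sub_eq, auto simp: F_def H_def R_def bm_def e2_def \<rho>_def cyc_def dest!: lt2)
    also have "\<dots> = det (mat (k+2) (k+2) (\<lambda>(i,j). H i j))" by (rule det_perm_both[OF p2])
    also have "\<dots> = det (mat (k+2) (k+2) (\<lambda>(i,j). if j = k+1 then \<phi> i else M i j))"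
      by (rule det_mat_cong, auto simp: H_def R_def bm_def)
    finally show ?thesis .
  qed
  have Q8: "D1 F k (k+2) (k+1) = det (mat (k+1) (k+1) (\<lambda>(i,j). if j = k then \<phi> (i+1) else M (i+1) (j+1)))"
  proof -
    have "D1 F k (k+2) (k+1) = det (mat (Suc k) (Suc k) (\<lambda>(i,j). if i = k then \<phi> (j+1) else M (i+1) (j+1)))"
      by (rule sub_eq, auto simp: F_def bm_def e1_def \<rho>_def)
    also have "\<dots> = det (mat (Suc k) (Suc k) (\<lambda>(i,j). if j = k then \<phi> (i+1) else M (j+1) (i+1)))"
      by (rule det_mat_transp)
    also have "\<dots> = det (mat (Suc k) (Suc k) (\<lambda>(i,j). if j = k then \<phi> (i+1) else M (i+1) (j+1)))"
      by (rule det_mat_cong, simp add: sym)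
    finally show ?thesis by simp
  qed
  have G: "D1 F k k k * D2 F k (k+1) (k+2) (k+1) (k+2) - D2 F k k (k+1) k (k+1) * D1 F k (k+2) (k+2)
       = D2 F k k (k+2) (k+1) (k+2) * D1 F k (k+1) k - D2 F k k (k+1) k (k+2) * D1 F k (k+2) (k+1)"
    by (rule gen3)
  have s: "signof (cyc k) * signof (cyc k) = (1::real)" by (rule signof_sq)
  have e: "(signof (cyc k) * x) * (signof (cyc k) * y) = x * (y::real)" for x y
  proof -
    have "(signof (cyc k) * x) * (signof (cyc k) * y) = (signof (cyc k) * signof (cyc k)) * (x * y)"
      by (simp add: ac_simps)
    thus ?thesis unfolding s by simp
  qed
  show ?thesis using G unfolding Q1 Q2 Q3 Q4 Q5 Q6 Q7 Q8 e
    by (simp add: ac_simps)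
qed



lemma prod_integrable:
  fixes u v :: "real \<Rightarrow> real"
  assumes u: "integrable lborel u" and v: "integrable lborel v"
  shows "integrable (lborel \<Otimes>\<^sub>M lborel) (\<lambda>p. u (fst p) * v (snd p))"
proof -
  have [measurable]: "u \<in> borel_measurable lborel" "v \<in> borel_measurable lborel"
    using u v by auto
  show ?thesis
  proof (rule lborel_pair.Fubini_integrable)
    show "(\<lambda>p. u (fst p) * v (snd p)) \<in> borel_measurable (lborel \<Otimes>\<^sub>M lborel)" by measurable
    have "(\<lambda>x. \<integral>y. norm (u (fst (x,y)) * v (snd (x,y))) \<partial>lborel) = (\<lambda>x. \<bar>u x\<bar> * (\<integral>y. \<bar>v y\<bar> \<partial>lborel))"
      by (simp add: abs_mult)
    moreover have "integrable lborel (\<lambda>x. \<bar>u x\<bar> * (\<integral>y. \<bar>v y\<bar> \<partial>lborel))"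
      using u by (intro integrable_mult_left integrable_abs)
    ultimately show "integrable lborel (\<lambda>x. \<integral>y. norm (u (fst (x,y)) * v (snd (x,y))) \<partial>lborel)" by simp
    show "AE x in lborel. integrable lborel (\<lambda>y. u (fst (x,y)) * v (snd (x,y)))"
      using v by simp
  qed
qed

lemma prod_integral:
  fixes u v :: "real \<Rightarrow> real"
  assumes u: "integrable lborel u" and v: "integrable lborel v"
  shows "integral\<^sup>L (lborel \<Otimes>\<^sub>M lborel) (\<lambda>p. u (fst p) * v (snd p)) = integral\<^sup>L lborel u * integral\<^sup>L lborel v"
proof -
  have "integral\<^sup>L (lborel \<Otimes>\<^sub>M lborel) (\<lambda>p. u (fst p) * v (snd p)) = (\<integral>x. (\<integral>y. u (fst (x,y)) * v (snd (x,y)) \<partial>lborel) \<partial>lborel)"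
    by (rule lborel_pair.integral_fst'[symmetric], rule prod_integrable[OF u v])
  also have "\<dots> = (\<integral>x. u x * integral\<^sup>L lborel v \<partial>lborel)" by simp
  also have "\<dots> = integral\<^sup>L lborel u * integral\<^sup>L lborel v" by simp
  finally show ?thesis .
qed

lemma powr_int: "set_integrable lborel {0..1::real} (\<lambda>x. x powr (-1/2))"
proof -
  have "((\<lambda>x::real. x powr (-1/2)) has_integral (1 powr (-1/2+1) / (-1/2+1))) {0..1}"
    by (rule has_integral_powr_from_0) auto
  hence "(\<lambda>x::real. x powr (-1/2)) integrable_on {0..1}" by blast
  hence "(\<lambda>x::real. x powr (-1/2)) absolutely_integrable_on {0..1}"
    by (rule nonnegative_absolutely_integrable_1) auto
  hence "integrable lebesgue (\<lambda>x::real. indicator {0..1} x *\<^sub>R x powr (-1/2))"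
    unfolding set_integrable_def .
  moreover have "(\<lambda>x::real. indicator {0..1} x *\<^sub>R x powr (-1/2)) \<in> borel_measurable lborel" by measurable
  ultimately show ?thesis unfolding set_integrable_def
    using integrable_completion by blast
qed


definition fm :: "nat \<Rightarrow> nat \<Rightarrow> nat \<Rightarrow> real \<times> real \<Rightarrow> real" where
  "fm a b t p = (fst p) ^ a * (snd p) ^ b / (fst p + snd p)
      * ((1 - fst p) / (1 + fst p)) ^ t * ((1 - snd p) / (1 + snd p)) ^ t"

definition gg :: "nat \<Rightarrow> nat \<Rightarrow> real \<Rightarrow> real" where
  "gg a t x = x ^ a / (1 + x) * ((1 - x) / (1 + x)) ^ t"

abbreviation "SQ \<equiv> {0<..<1::real} \<times> {0<..<1::real}"

lemma mom_fm: "mom s t i j = (LINT p : SQ | lborel. fm (s+i) (s+j) t p)"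
  unfolding mom_def fm_def ..

lemma phi_gg: "phi s t i = sqrt 2 * (LINT x : {0<..<1} | lborel. gg (s+i) t x)"
  unfolding phi_def gg_def ..

lemma w_bounds: "0 < x \<Longrightarrow> x < 1 \<Longrightarrow> 0 \<le> (1 - x) / (1 + x) \<and> (1 - x) / (1 + x) \<le> (1::real)"
  by (auto simp: divide_simps)

lemma sqrt_bound:
  fixes x y :: real assumes x: "0 < x" and y: "0 < y"
  shows "1 / (x + y) \<le> x powr (-1/2) * y powr (-1/2)"
proof -
  have m: "(-1/2::real) = - (1/2)" by simp
  have sx: "x powr (-1/2) = inverse (sqrt x)" unfolding m powr_minus using x by (simp add: powr_half_sqrt)
  have sy: "y powr (-1/2) = inverse (sqrt y)" unfolding m powr_minus using y by (simp add: powr_half_sqrt)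
  have sx2: "sqrt x * sqrt x = x" using x by simp
  have sy2: "sqrt y * sqrt y = y" using y by simp
  have "0 \<le> (sqrt x - sqrt y) * (sqrt x - sqrt y)" by simp
  hence "2 * (sqrt x * sqrt y) \<le> sqrt x * sqrt x + sqrt y * sqrt y" by (simp add: algebra_simps)
  hence h: "2 * (sqrt x * sqrt y) \<le> x + y" unfolding sx2 sy2 .
  have pos: "0 < sqrt x * sqrt y" using x y by simp
  have le: "sqrt x * sqrt y \<le> x + y" using h pos by linarith
  have "1 / (x + y) \<le> 1 / (sqrt x * sqrt y)"
    by (rule divide_left_mono[OF le]) (use pos x y in auto)
  also have "\<dots> = x powr (-1/2) * y powr (-1/2)" unfolding sx sy by (simp add: divide_inverse)
  finally show ?thesis .
qed

lemma fm_bound: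
  assumes "p \<in> SQ"
  shows "\<bar>fm a b t p\<bar> \<le> fst p powr (-1/2) * snd p powr (-1/2)"
proof -
  obtain x y where p: "p = (x,y)" and x: "0 < x" "x < 1" and y: "0 < y" "y < 1" using assms by auto
  define u where "u = ((1 - x) / (1 + x)) ^ t"
  define v where "v = ((1 - y) / (1 + y)) ^ t"
  have u: "0 \<le> u" "u \<le> 1" unfolding u_def using w_bounds[OF x] by (auto intro: power_le_one)
  have v: "0 \<le> v" "v \<le> 1" unfolding v_def using w_bounds[OF y] by (auto intro: power_le_one)
  have xa: "0 \<le> x ^ a" "x ^ a \<le> 1" using x by (auto intro: power_le_one)
  have yb: "0 \<le> y ^ b" "y ^ b \<le> 1" using y by (auto intro: power_le_one)
  have prod: "0 \<le> x ^ a * y ^ b * u * v" "x ^ a * y ^ b * u * v \<le> 1"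
    using u v xa yb by (auto intro!: mult_le_one mult_nonneg_nonneg)
  have e: "fm a b t p = (x ^ a * y ^ b * u * v) / (x + y)"
    unfolding p fm_def u_def v_def by simp
  have "\<bar>fm a b t p\<bar> = (x ^ a * y ^ b * u * v) / (x + y)"
    unfolding e using prod x y by simp
  also have "\<dots> \<le> 1 / (x + y)"
    using prod x y by (intro divide_right_mono) auto
  also have "\<dots> \<le> x powr (-1/2) * y powr (-1/2)" using sqrt_bound[OF x(1) y(1)] by simp
  finally show ?thesis unfolding p by simp
qed

lemma U_int: "integrable lborel (\<lambda>x::real. indicator {0..1} x * x powr (-1/2))"
  using powr_int unfolding set_integrable_def by simp

lemma fm_int: "set_integrable lborel SQ (fm a b t)"
  unfolding set_integrable_def
proof (rule Bochner_Integration.integrable_bound)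
  let ?U = "\<lambda>x::real. indicator {0..1} x * x powr (-1/2)"
  have "integrable (lborel \<Otimes>\<^sub>M lborel) (\<lambda>p. ?U (fst p) * ?U (snd p))"
    by (rule prod_integrable[OF U_int U_int])
  thus "integrable lborel (\<lambda>p. ?U (fst p) * ?U (snd p))" unfolding lborel_prod .
  have "(\<lambda>p. indicator {0<..<1::real} (fst p) * indicator {0<..<1::real} (snd p) * fm a b t p) \<in> borel_measurable (lborel \<Otimes>\<^sub>M lborel)"
    unfolding fm_def by measurable
  moreover have "(\<lambda>p. indicator SQ p *\<^sub>R fm a b t p) = (\<lambda>p. indicator {0<..<1::real} (fst p) * indicator {0<..<1::real} (snd p) * fm a b t p)"
    by (auto simp: indicator_def mem_Times_iff)
  ultimately show "(\<lambda>p. indicator SQ p *\<^sub>R fm a b t p) \<in> borel_measurable lborel"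
    unfolding lborel_prod by simp
  show "AE p in lborel. norm (indicator SQ p *\<^sub>R fm a b t p) \<le> norm (?U (fst p) * ?U (snd p))"
  proof (rule AE_I2)
    fix p :: "real \<times> real"
    show "norm (indicator SQ p *\<^sub>R fm a b t p) \<le> norm (?U (fst p) * ?U (snd p))"
    proof (cases "p \<in> SQ")
      case True
      hence f: "fst p \<in> {0..1}" "snd p \<in> {0..1}" "0 < fst p" "0 < snd p" by (auto simp: mem_Times_iff)
      have l: "norm (indicator SQ p *\<^sub>R fm a b t p) = \<bar>fm a b t p\<bar>" using True by simp
      have r: "norm (?U (fst p) * ?U (snd p)) = fst p powr (-1/2) * snd p powr (-1/2)"
        using f by (simp add: abs_mult)
      show ?thesis unfolding l r by (rule fm_bound[OF True])
    next
      case False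
      hence "indicator SQ p = (0::real)" by simp
      thus ?thesis by simp
    qed
  qed
qed

lemma gg_int: "set_integrable lborel {0<..<1} (gg a t)"
proof -
  have "set_integrable lborel {0..1} (gg a t)"
    unfolding set_integrable_def gg_def
    by (rule borel_integrable_compact, simp, intro continuous_intros, auto)
  thus ?thesis by (rule set_integrable_subset) auto
qed



lemma SQ_sets: "SQ \<in> sets lborel"
proof -
  have "open SQ" by (intro open_Times) auto
  thus ?thesis by simp
qed

lemma fm_meas: "(\<lambda>p. indicator SQ p *\<^sub>R fm a b t p) \<in> borel_measurable (lborel \<Otimes>\<^sub>M lborel)"
proof -
  have "(\<lambda>p. indicator {0<..<1::real} (fst p) * indicator {0<..<1::real} (snd p) * fm a b t p) \<in> borel_measurable (lborel \<Otimes>\<^sub>M lborel)"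
    unfolding fm_def by measurable
  moreover have "(\<lambda>p. indicator SQ p *\<^sub>R fm a b t p) = (\<lambda>p. indicator {0<..<1::real} (fst p) * indicator {0<..<1::real} (snd p) * fm a b t p)"
    by (auto simp: indicator_def mem_Times_iff)
  ultimately show ?thesis by simp
qed

lemma mom_sym: "mom s t i j = mom s t j i"
proof -
  let ?H = "\<lambda>a b p. indicator SQ p *\<^sub>R fm a b t p"
  have "(\<integral>(x,y). ?H (s+i) (s+j) (y,x) \<partial>(lborel \<Otimes>\<^sub>M lborel)) = integral\<^sup>L (lborel \<Otimes>\<^sub>M lborel) (?H (s+i) (s+j))"
    by (rule lborel_pair.integral_product_swap[OF fm_meas])
  moreover have "(\<lambda>(x,y). ?H (s+i) (s+j) (y,x)) = ?H (s+j) (s+i)"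
    by (auto simp: fun_eq_iff indicator_def fm_def mem_Times_iff add.commute)
  ultimately have "integral\<^sup>L lborel (?H (s+j) (s+i)) = integral\<^sup>L lborel (?H (s+i) (s+j))"
    unfolding lborel_prod by simp
  thus ?thesis unfolding mom_fm set_lebesgue_integral_def by simp
qed

lemma fm_rec:
  assumes "p \<in> SQ"
  shows "fm a b (Suc t) p = fm a b t p - 2 * (gg a t (fst p) * gg b t (snd p))"
proof -
  obtain x y where p: "p = (x,y)" and x: "0 < x" "x < 1" and y: "0 < y" "y < 1" using assms by auto
  define u where "u = ((1 - x) / (1 + x)) ^ t"
  define v where "v = ((1 - y) / (1 + y)) ^ t"
  define K where "K = x ^ a * y ^ b * u * v"
  define D where "D = (1 + x) * (1 + y)"
  have D: "D \<noteq> 0" "0 < D" unfolding D_def using x y by auto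
  have xy: "x + y \<noteq> 0" using x y by simp
  have w: "((1 - x) / (1 + x)) * ((1 - y) / (1 + y)) = 1 - 2 * (x + y) / D"
  proof -
    have "1 - 2 * (x + y) / D = (D - 2 * (x + y)) / D" using D by (simp add: diff_divide_distrib)
    also have "D - 2 * (x + y) = (1 - x) * (1 - y)" unfolding D_def by (simp add: algebra_simps)
    also have "(1 - x) * (1 - y) / D = ((1 - x) / (1 + x)) * ((1 - y) / (1 + y))" unfolding D_def by simp
    finally show ?thesis by simp
  qed
  have "fm a b (Suc t) p = K / (x + y) * (((1 - x) / (1 + x)) * ((1 - y) / (1 + y)))"
    unfolding p fm_def u_def v_def K_def by (simp add: power_Suc2 ac_simps)
  also have "\<dots> = K / (x + y) - K / (x + y) * (2 * (x + y) / D)"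
    unfolding w by (simp add: right_diff_distrib)
  also have "K / (x + y) * (2 * (x + y) / D) = 2 * (K / D)"
  proof -
    have "D * x + D * y \<noteq> 0" using D xy by (metis distrib_left mult_eq_0_iff)
    thus ?thesis using xy D by (simp add: field_simps)
  qed
  also have "K / (x + y) = fm a b t p"
    unfolding p fm_def u_def v_def K_def by simp
  also have "K / D = gg a t (fst p) * gg b t (snd p)"
    unfolding p gg_def u_def v_def K_def D_def by simp
  finally show ?thesis .
qed

lemma mom_rec: "mom s (Suc t) i j = mom s t i j - phi s t i * phi s t j"
proof -
  define a where "a = s + i"
  define b where "b = s + j"
  define Ga where "Ga = (\<lambda>x. indicator {0<..<1::real} x * gg a t x)"
  define Gb where "Gb = (\<lambda>x. indicator {0<..<1::real} x * gg b t x)"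
  have iGa: "integrable lborel Ga" using gg_int[of a t] unfolding set_integrable_def Ga_def by simp
  have iGb: "integrable lborel Gb" using gg_int[of b t] unfolding set_integrable_def Gb_def by simp
  have eqP: "(\<lambda>p. indicator SQ p *\<^sub>R (2 * (gg a t (fst p) * gg b t (snd p)))) = (\<lambda>p. 2 * (Ga (fst p) * Gb (snd p)))"
    by (auto simp: fun_eq_iff indicator_def Ga_def Gb_def mem_Times_iff)
  have iP: "integrable lborel (\<lambda>p::real\<times>real. Ga (fst p) * Gb (snd p))"
    using prod_integrable[OF iGa iGb] unfolding lborel_prod .
  have sP: "set_integrable lborel SQ (\<lambda>p. 2 * (gg a t (fst p) * gg b t (snd p)))"
    unfolding set_integrable_def eqP using iP by simp
  have IP: "(LINT p : SQ | lborel. 2 * (gg a t (fst p) * gg b t (snd p))) = 2 * (integral\<^sup>L lborel Ga * integral\<^sup>L lborel Gb)"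
  proof -
    have "(LINT p : SQ | lborel. 2 * (gg a t (fst p) * gg b t (snd p))) = 2 * integral\<^sup>L lborel (\<lambda>p::real\<times>real. Ga (fst p) * Gb (snd p))"
      unfolding set_lebesgue_integral_def eqP by simp
    also have "integral\<^sup>L lborel (\<lambda>p::real\<times>real. Ga (fst p) * Gb (snd p)) = integral\<^sup>L lborel Ga * integral\<^sup>L lborel Gb"
      using prod_integral[OF iGa iGb] unfolding lborel_prod .
    finally show ?thesis .
  qed
  have "mom s (Suc t) i j = (LINT p : SQ | lborel. fm a b t p - 2 * (gg a t (fst p) * gg b t (snd p)))"
    unfolding mom_fm a_def[symmetric] b_def[symmetric]
    by (rule set_lebesgue_integral_cong[OF SQ_sets], auto simp: fm_rec)
  also have "\<dots> = mom s t i j - 2 * (integral\<^sup>L lborel Ga * integral\<^sup>L lborel Gb)"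
    by (subst set_integral_diff(2)[OF fm_int sP], subst IP, simp only: mom_fm a_def b_def)
  finally have m: "mom s (Suc t) i j = mom s t i j - 2 * (integral\<^sup>L lborel Ga * integral\<^sup>L lborel Gb)" .
  have "phi s t i = sqrt 2 * integral\<^sup>L lborel Ga"
    unfolding phi_gg set_lebesgue_integral_def Ga_def a_def by simp
  moreover have "phi s t j = sqrt 2 * integral\<^sup>L lborel Gb"
    unfolding phi_gg set_lebesgue_integral_def Gb_def b_def by simp
  ultimately show ?thesis using m by (simp add: algebra_simps)
qed

lemma mom_shift: "mom (Suc s) t i j = mom s t (Suc i) (Suc j)"
  unfolding mom_def by simp

lemma phi_shift: "phi (Suc s) t i = phi s t (Suc i)"
  unfolding phi_def by simp


lemma det_mat_cong2: "N = N' \<Longrightarrow> (\<And>i j. i < N' \<Longrightarrow> j < N' \<Longrightarrow> X i j = Y i j) \<Longrightarrow>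
  det (mat N N (\<lambda>(i,j). X i j)) = det (mat N' N' (\<lambda>(i,j). Y i j))"
  by (intro arg_cong[where f=det] eq_matI, auto)

theorem proposition3p3:
  fixes s t :: nat
  shows "(\<forall>n. tau s (t + 1) (n + 1) * tau s t n - tau s (t + 1) n * tau s t (n + 1)
              = - ((sigma_det s t n) ^ 2))
       \<and> (\<forall>n\<ge>1. tau s t n * tau (s + 1) (t + 1) n - tau s t (n + 1) * tau (s + 1) (t + 1) (n - 1)
              = xi s (t + 1) n * xi s t n - sigma_det (s + 1) t (n - 1) * sigma_det s t n)"
proof (intro conjI allI impI)
  have sym: "\<And>i j. mom s t i j = mom s t j i" by (rule mom_sym)
  have e: "(\<lambda>(i,j). mom s (t+1) i j) = (\<lambda>(i,j). mom s t i j - phi s t i * phi s t j)"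
    by (auto simp: mom_rec)
  fix n
  show "tau s (t + 1) (n + 1) * tau s t n - tau s (t + 1) n * tau s t (n + 1) = - ((sigma_det s t n) ^ 2)"
    unfolding tau_def sigma_det_def e
    by (rule part_a[where M="mom s t" and \<phi>="phi s t" and n=n, OF sym])
next
  have sym: "\<And>i j. mom s t i j = mom s t j i" by (rule mom_sym)
  fix n :: nat assume "1 \<le> n"
  then obtain k where n: "n = Suc k" by (cases n) auto
  note P = part_b[where M="mom s t" and \<phi>="phi s t" and k=k, OF sym]
  have t1: "tau s t n = det (mat (k+1) (k+1) (\<lambda>(i,j). mom s t i j))"
    unfolding tau_def by (rule det_mat_cong2) (auto simp: n)
  have t2: "tau (s+1) (t+1) n = det (mat (k+1) (k+1) (\<lambda>(i,j). mom s t (i+1) (j+1) - phi s t (i+1) * phi s t (j+1)))"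
    unfolding tau_def by (rule det_mat_cong2) (auto simp: n mom_shift mom_rec phi_shift)
  have t3: "tau s t (n+1) = det (mat (k+2) (k+2) (\<lambda>(i,j). mom s t i j))"
    unfolding tau_def by (rule det_mat_cong2) (auto simp: n)
  have t4: "tau (s+1) (t+1) (n-1) = det (mat k k (\<lambda>(i,j). mom s t (i+1) (j+1) - phi s t (i+1) * phi s t (j+1)))"
    unfolding tau_def by (rule det_mat_cong2) (auto simp: n mom_shift mom_rec phi_shift)
  have x1: "xi s (t+1) n = det (mat (k+1) (k+1) (\<lambda>(i,j). mom s t i (j+1) - phi s t i * phi s t (j+1)))"
    unfolding xi_def by (rule det_mat_cong2) (auto simp: n mom_rec)
  have x2: "xi s t n = det (mat (k+1) (k+1) (\<lambda>(i,j). mom s t i (j+1)))"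
    unfolding xi_def by (rule det_mat_cong2) (auto simp: n)
  have s1: "sigma_det (s+1) t (n-1) = det (mat (k+1) (k+1) (\<lambda>(i,j). if j = k then phi s t (i+1) else mom s t (i+1) (j+1)))"
    unfolding sigma_det_def by (rule det_mat_cong2) (auto simp: n mom_shift phi_shift)
  have s2: "sigma_det s t n = det (mat (k+2) (k+2) (\<lambda>(i,j). if j = k+1 then phi s t i else mom s t i j))"
    unfolding sigma_det_def by (rule det_mat_cong2) (auto simp: n)
  show "tau s t n * tau (s + 1) (t + 1) n - tau s t (n + 1) * tau (s + 1) (t + 1) (n - 1)
      = xi s (t + 1) n * xi s t n - sigma_det (s + 1) t (n - 1) * sigma_det s t n"
    unfolding t1 t2 t3 t4 x1 x2 s1 s2 by (rule P)
qed

end
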